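(* Let $l\ge2$ be even and let $a,b\in\{1,\dots,l-1\}$ be such that $X=X(\mathbb{Z}_{2l},\{\pm a,\pm b\})$ is a connected $4$-regular circulant graph with $a+b\ne l$. Then $X$ does not admit perfect state transfer between (distinct) vertex type states.
   Context: $X(\mathbb{Z}_n,S)$ (with $S\subseteq\mathbb{Z}_n\setminus\{0\}$, $S=-S$) has vertex set $\mathbb{Z}_n$ and edges $\{x,y\}$ with $y-x\in S$. For a graph with symmetric arc set $\mathcal{A}$ ($t((x,y))=y$, $(x,y)^{-1}=(y,x)$): boundary matrix $d_{x,a}=\frac{1}{\sqrt{\deg x}}\delta_{x,t(a)}$, shift matrix $R_{a,b}=\delta_{a,b^{-1}}$, $U=R(2d^*d-I_{\mathcal{A}})$. Perfect state transfer between vertex type states means $U^\tau d^*e_x=\gamma d^*e_y$ for some distinct vertices $x,y$, some $\tau\in\mathbb{Z}_{\ge1}$ and some $|\gamma|=1$ ($e_x$ the standard unit vector). *)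

theory Defs
  imports Complex_Main
begin

text \<open>Graphs are given by a finite vertex set V and a symmetric arc set A of pairs
 (x,y) (the arc from x to y); t((x,y)) = y and (x,y)^{-1} = (y,x).\<close>

definition mmult :: "'j set \<Rightarrow> ('i \<Rightarrow> 'j \<Rightarrow> complex) \<Rightarrow> ('j \<Rightarrow> 'k \<Rightarrow> complex) \<Rightarrow> 'i \<Rightarrow> 'k \<Rightarrow> complex" where
  "mmult J M N = (\<lambda>i k. \<Sum>j\<in>J. M i j * N j k)"

definition idmat :: "'i \<Rightarrow> 'i \<Rightarrow> complex" where
  "idmat = (\<lambda>i j. if i = j then 1 else 0)"

fun mpow :: "'i set \<Rightarrow> ('i \<Rightarrow> 'i \<Rightarrow> complex) \<Rightarrow> nat \<Rightarrow> 'i \<Rightarrow> 'i \<Rightarrow> complex" where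
  "mpow I M 0 = idmat"
| "mpow I M (Suc n) = mmult I M (mpow I M n)"

definition mvec :: "'j set \<Rightarrow> ('i \<Rightarrow> 'j \<Rightarrow> complex) \<Rightarrow> ('j \<Rightarrow> complex) \<Rightarrow> 'i \<Rightarrow> complex" where
  "mvec J M v = (\<lambda>i. \<Sum>j\<in>J. M i j * v j)"

definition unitvec :: "'v \<Rightarrow> 'v \<Rightarrow> complex" where
  "unitvec x = (\<lambda>y. if y = x then 1 else 0)"

definition conj_transpose :: "('i \<Rightarrow> 'j \<Rightarrow> complex) \<Rightarrow> 'j \<Rightarrow> 'i \<Rightarrow> complex" where
  "conj_transpose M = (\<lambda>j i. cnj (M i j))"

definition gdeg :: "'v set \<Rightarrow> ('v \<times> 'v) set \<Rightarrow> 'v \<Rightarrow> nat" where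
  "gdeg V A x = card {y \<in> V. (x, y) \<in> A}"

definition bdry :: "'v set \<Rightarrow> ('v \<times> 'v) set \<Rightarrow> 'v \<Rightarrow> ('v \<times> 'v) \<Rightarrow> complex" where
  "bdry V A = (\<lambda>x a. if x = snd a then complex_of_real (1 / sqrt (real (gdeg V A x))) else 0)"

definition shiftR :: "('v \<times> 'v) \<Rightarrow> ('v \<times> 'v) \<Rightarrow> complex" where
  "shiftR = (\<lambda>a b. if a = prod.swap b then 1 else 0)"

definition walkU :: "'v set \<Rightarrow> ('v \<times> 'v) set \<Rightarrow> ('v \<times> 'v) \<Rightarrow> ('v \<times> 'v) \<Rightarrow> complex" where
  "walkU V A = mmult A shiftR
     (\<lambda>a b. 2 * mmult V (conj_transpose (bdry V A)) (bdry V A) a b - idmat a b)"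

definition has_vertex_PST :: "'v set \<Rightarrow> ('v \<times> 'v) set \<Rightarrow> bool" where
  "has_vertex_PST V A \<longleftrightarrow>
    (\<exists>x y (\<tau>::nat) (\<gamma>::complex). x \<in> V \<and> y \<in> V \<and> x \<noteq> y \<and> \<tau> \<ge> 1 \<and> cmod \<gamma> = 1 \<and>
      (\<forall>a\<in>A. mvec A (mpow A (walkU V A) \<tau>) (mvec V (conj_transpose (bdry V A)) (unitvec x)) a
             = \<gamma> * mvec V (conj_transpose (bdry V A)) (unitvec y) a))"

text \<open>Circulant graph X(Z_n, S): vertices 0..n-1 (representatives of Z_n),
 arcs (x,y) with (y - x) mod n in S, where S is a set of residues in {0..n-1}.\<close>
definition circ_verts :: "int \<Rightarrow> int set" where
  "circ_verts n = {0..<n}"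

definition circ_arcs :: "int \<Rightarrow> int set \<Rightarrow> (int \<times> int) set" where
  "circ_arcs n S = {(x, y). x \<in> circ_verts n \<and> y \<in> circ_verts n \<and> (y - x) mod n \<in> S}"

definition graph_connected :: "'v set \<Rightarrow> ('v \<times> 'v) set \<Rightarrow> bool" where
  "graph_connected V A \<longleftrightarrow> (\<forall>x\<in>V. \<forall>y\<in>V. (x, y) \<in> A\<^sup>*)"

definition graph_regular :: "'v set \<Rightarrow> ('v \<times> 'v) set \<Rightarrow> nat \<Rightarrow> bool" where
  "graph_regular V A k \<longleftrightarrow> (\<forall>x\<in>V. gdeg V A x = k)"

end

theory Submission
  imports Defs "HOL-Computational_Algebra.Polynomial" "Jordan_Normal_Form.Char_Poly"
begin


definition zspan :: "complex set \<Rightarrow> complex set" where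
  "zspan G = {z. \<exists>c. z = (\<Sum>g\<in>G. of_int (c g) * g)}"

lemma det_trick:
  assumes fin: "finite G" and g0: "g0 \<in> G" "g0 \<noteq> 0"
    and cl: "\<forall>g\<in>G. x * g \<in> zspan G"
  shows "algebraic_int x"
proof -
  obtain gs where gs: "set gs = G" "distinct gs" using finite_distinct_list[OF fin] by blast
  define r where "r = length gs"
  have bij: "bij_betw ((!) gs) {..<r} G" using bij_betw_nth[OF gs(2)] gs(1) r_def by auto
  have "\<forall>i. \<exists>c. i < r \<longrightarrow> x * gs!i = (\<Sum>g\<in>G. of_int (c g) * g)"
    using cl gs(1) unfolding zspan_def r_def by (auto simp: nth_mem)
  then obtain C where C: "\<And>i. i < r \<Longrightarrow> x * gs!i = (\<Sum>g\<in>G. of_int (C i g) * g)"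
    by metis
  have C': "x * gs!i = (\<Sum>j<r. of_int (C i (gs!j)) * gs!j)" if "i < r" for i
    using C[OF that] sum.reindex_bij_betw[OF bij, of "\<lambda>g. of_int (C i g) * g"] by simp
  define Mi :: "int mat" where "Mi = mat r r (\<lambda>(i,j). C i (gs!j))"
  define M :: "complex mat" where "M = map_mat of_int Mi"
  define v :: "complex vec" where "v = vec r (\<lambda>i. gs!i)"
  have Mi: "Mi \<in> carrier_mat r r" unfolding Mi_def by auto
  have M: "M \<in> carrier_mat r r" unfolding M_def using Mi by auto
  have Mv: "M *\<^sub>v v = x \<cdot>\<^sub>v v"
  proof (rule eq_vecI)
    fix i assume "i < dim_vec (x \<cdot>\<^sub>v v)"
    hence i: "i < r" unfolding v_def by auto
    have "(M *\<^sub>v v) $ i = (\<Sum>j<r. of_int (C i (gs!j)) * gs!j)"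
      using i unfolding M_def Mi_def v_def mult_mat_vec_def scalar_prod_def
      by (auto simp: lessThan_atLeast0 intro!: sum.cong)
    also have "\<dots> = (x \<cdot>\<^sub>v v) $ i" using C'[OF i] i unfolding v_def by simp
    finally show "(M *\<^sub>v v) $ i = (x \<cdot>\<^sub>v v) $ i" .
  qed (auto simp: M_def Mi_def v_def)
  obtain j0 where j0: "j0 < r" "gs!j0 = g0" using g0(1) gs(1) unfolding r_def by (metis in_set_conv_nth)
  have vnz: "v \<noteq> 0\<^sub>v r"
  proof
    assume "v = 0\<^sub>v r"
    hence "v $ j0 = 0" using j0 by simp
    thus False using j0 g0 unfolding v_def by simp
  qed
  have "eigenvector M v x" unfolding eigenvector_def using M Mv vnz
    by (auto simp: v_def)
  hence "eigenvalue M x" unfolding eigenvalue_def by blast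
  hence root: "poly (char_poly M) x = 0" using eigenvalue_root_char_poly[OF M] by simp
  have cp: "char_poly M = map_poly of_int (char_poly Mi)"
    unfolding M_def by (rule of_int_hom.char_poly_hom[OF Mi])
  have "lead_coeff (char_poly Mi) = 1" using degree_monic_char_poly[OF Mi] by simp
  thus ?thesis using root cp algebraic_int_altdef_ipoly by metis
qed



lemma zspan_add: "z1 \<in> zspan G \<Longrightarrow> z2 \<in> zspan G \<Longrightarrow> z1 + z2 \<in> zspan G"
proof -
  assume "z1 \<in> zspan G" "z2 \<in> zspan G"
  then obtain c1 c2 where "z1 = (\<Sum>g\<in>G. of_int (c1 g) * g)" "z2 = (\<Sum>g\<in>G. of_int (c2 g) * g)"
    unfolding zspan_def by auto
  hence "z1 + z2 = (\<Sum>g\<in>G. of_int ((\<lambda>g. c1 g + c2 g) g) * g)"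
    by (simp add: sum.distrib distrib_right)
  thus ?thesis unfolding zspan_def by (intro CollectI exI)
qed

lemma zspan_smult: "z \<in> zspan G \<Longrightarrow> of_int k * z \<in> zspan G"
proof -
  assume "z \<in> zspan G"
  then obtain c where "z = (\<Sum>g\<in>G. of_int (c g) * g)" unfolding zspan_def by auto
  hence "of_int k * z = (\<Sum>g\<in>G. of_int ((\<lambda>g. k * c g) g) * g)"
    by (simp add: sum_distrib_left mult.assoc)
  thus ?thesis unfolding zspan_def by (intro CollectI exI)
qed

lemma zspan_zero: "0 \<in> zspan G"
  unfolding zspan_def by (rule CollectI, rule exI[of _ "\<lambda>_. 0"], simp)

lemma zspan_sum: "finite I \<Longrightarrow> (\<And>i. i \<in> I \<Longrightarrow> f i \<in> zspan G) \<Longrightarrow> sum f I \<in> zspan G"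
  by (induct I rule: finite_induct) (auto intro: zspan_add zspan_zero)

lemma zspan_gen: assumes "finite G" "g \<in> G" shows "g \<in> zspan G"
proof -
  have "(\<Sum>h\<in>G. of_int ((\<lambda>h. if h = g then 1 else 0) h) * h) = (\<Sum>h\<in>G. if h = g then h else 0)"
    by (rule sum.cong) auto
  also have "\<dots> = g" using assms by (simp add: sum.delta)
  finally show ?thesis unfolding zspan_def by (intro CollectI exI) (rule sym)
qed

lemma zspan_mult_closed:
  assumes "\<forall>g\<in>G. w * g \<in> zspan G" "z \<in> zspan G" "finite G"
  shows "w * z \<in> zspan G"
proof -
  obtain c where z: "z = (\<Sum>g\<in>G. of_int (c g) * g)" using assms(2) unfolding zspan_def by auto
  have "w * z = (\<Sum>g\<in>G. of_int (c g) * (w * g))" unfolding z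
    by (simp add: sum_distrib_left algebra_simps)
  also have "\<dots> \<in> zspan G" using assms(1,3) by (intro zspan_sum zspan_smult) auto
  finally show ?thesis .
qed

lemma monic_root_reduce:
  fixes p :: "int poly" and x :: complex
  assumes "poly (of_int_poly p) x = 0" "lead_coeff p = 1"
  shows "x ^ degree p = - (\<Sum>i<degree p. of_int (coeff p i) * x ^ i)"
proof -
  have "0 = (\<Sum>i\<le>degree p. of_int (coeff p i) * x ^ i)"
    using assms(1) by (simp add: poly_altdef)
  also have "\<dots> = (\<Sum>i<degree p. of_int (coeff p i) * x ^ i) + x ^ degree p"
    using assms(2) by (simp add: lessThan_Suc_atMost[symmetric])
  finally show ?thesis by (simp add: eq_neg_iff_add_eq_0 add.commute)
qed

lemma algebraic_int_ring:
  fixes x y :: complex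
  assumes "algebraic_int x" "algebraic_int y"
  shows "algebraic_int (x * y) \<and> algebraic_int (x + y)"
proof -
  obtain p where p: "poly (of_int_poly p) x = 0" "lead_coeff p = 1"
    using assms(1) algebraic_int_altdef_ipoly[of x] by auto
  obtain q where q: "poly (of_int_poly q) y = 0" "lead_coeff q = 1"
    using assms(2) algebraic_int_altdef_ipoly[of y] by auto
  define D where "D = degree p"
  define E where "E = degree q"
  have D: "D > 0"
  proof (rule ccontr)
    assume "\<not> D > 0"
    hence "degree p = 0" unfolding D_def by simp
    from monic_root_reduce[OF p] this show False by simp
  qed
  have E: "E > 0"
  proof (rule ccontr)
    assume "\<not> E > 0"
    hence "degree q = 0" unfolding E_def by simp
    from monic_root_reduce[OF q] this show False by simp
  qed
  define G where "G = (\<lambda>(i,j). x ^ i * y ^ j) ` ({..<D} \<times> {..<E})"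
  have fin: "finite G" unfolding G_def by auto
  have one: "1 \<in> G" unfolding G_def using D E by (auto intro!: image_eqI[of _ _ "(0,0)"])
  have xcl: "\<forall>g\<in>G. x * g \<in> zspan G"
  proof
    fix g assume "g \<in> G"
    then obtain i j where ij: "i < D" "j < E" "g = x ^ i * y ^ j" unfolding G_def by auto
    show "x * g \<in> zspan G"
    proof (cases "Suc i < D")
      case True
      hence "x * g \<in> G" unfolding G_def using ij by (auto intro!: image_eqI[of _ _ "(Suc i, j)"])
      thus ?thesis using fin zspan_gen by blast
    next
      case False
      hence "Suc i = D" using ij by simp
      hence "x * g = x ^ D * y ^ j" using ij by (metis mult.assoc power_Suc)
      also have "\<dots> = (\<Sum>k<D. of_int (- coeff p k) * (x ^ k * y ^ j))"
        using monic_root_reduce[OF p] unfolding D_def[symmetric]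
        by (simp add: sum_distrib_right sum_distrib_left sum_negf mult_ac)
      also have "\<dots> \<in> zspan G" using ij fin
        by (intro zspan_sum zspan_smult zspan_gen) (auto simp: G_def)
      finally show ?thesis .
    qed
  qed
  have ycl: "\<forall>g\<in>G. y * g \<in> zspan G"
  proof
    fix g assume "g \<in> G"
    then obtain i j where ij: "i < D" "j < E" "g = x ^ i * y ^ j" unfolding G_def by auto
    show "y * g \<in> zspan G"
    proof (cases "Suc j < E")
      case True
      hence "y * g \<in> G" unfolding G_def using ij by (auto intro!: image_eqI[of _ _ "(i, Suc j)"])
      thus ?thesis using fin zspan_gen by blast
    next
      case False
      hence "Suc j = E" using ij by simp
      hence "y * g = x ^ i * y ^ E" using ij by (metis mult.left_commute power_Suc)
      also have "\<dots> = (\<Sum>k<E. of_int (- coeff q k) * (x ^ i * y ^ k))"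
        using monic_root_reduce[OF q] unfolding E_def[symmetric]
        by (simp add: sum_distrib_right sum_distrib_left sum_negf mult_ac)
      also have "\<dots> \<in> zspan G" using ij fin
        by (intro zspan_sum zspan_smult zspan_gen) (auto simp: G_def)
      finally show ?thesis .
    qed
  qed
  have "\<forall>g\<in>G. (x * y) * g \<in> zspan G"
  proof
    fix g assume g: "g \<in> G"
    have "(x * y) * g = x * (y * g)" by simp
    also have "\<dots> \<in> zspan G" using zspan_mult_closed[OF xcl _ fin] ycl g by blast
    finally show "(x * y) * g \<in> zspan G" .
  qed
  moreover have "\<forall>g\<in>G. (x + y) * g \<in> zspan G"
    using xcl ycl by (simp add: distrib_right zspan_add)
  ultimately show ?thesis using det_trick[OF fin one] by auto
qed

lemma algebraic_int_mult[intro]: "algebraic_int x \<Longrightarrow> algebraic_int y \<Longrightarrow> algebraic_int (x * y :: complex)"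
  using algebraic_int_ring by blast
lemma algebraic_int_add[intro]: "algebraic_int x \<Longrightarrow> algebraic_int y \<Longrightarrow> algebraic_int (x + y :: complex)"
  using algebraic_int_ring by blast
lemma algebraic_int_diff[intro]: "algebraic_int x \<Longrightarrow> algebraic_int y \<Longrightarrow> algebraic_int (x - y :: complex)"
  using algebraic_int_add[of x "-y"] by auto
lemma algebraic_int_power[intro]: "algebraic_int x \<Longrightarrow> algebraic_int (x ^ n :: complex)"
  by (induct n) auto
lemma algebraic_int_sum[intro]: "(\<And>i. i \<in> I \<Longrightarrow> algebraic_int (f i :: complex)) \<Longrightarrow> algebraic_int (sum f I)"
  by (induct I rule: infinite_finite_induct) auto
lemma algebraic_int_prod[intro]: "(\<And>i. i \<in> I \<Longrightarrow> algebraic_int (f i :: complex)) \<Longrightarrow> algebraic_int (prod f I)"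
  by (induct I rule: infinite_finite_induct) auto



lemma prod_pairs:
  fixes K :: nat and f :: "nat \<Rightarrow> 'a::comm_monoid_mult"
  shows "(\<Prod>i<2*K. f i) = (\<Prod>i<K. f i * f (i + K))"
proof -
  have "(\<Prod>i<2*K. f i) = prod f {0..<K} * prod f {K..<2*K}"
    by (simp add: prod.atLeastLessThan_concat lessThan_atLeast0)
  also have "prod f {K..<2*K} = prod (\<lambda>i. f (i + K)) {0..<K}"
    using prod.shift_bounds_nat_ivl[of f 0 K K] by (simp add: mult_2)
  finally show ?thesis by (simp add: prod.distrib lessThan_atLeast0)
qed

lemma prod_H: "(\<eta>::complex) ^ (2^u) = -1 \<Longrightarrow> (\<Prod>i<2^u. (1 - \<eta>^(2*i+1))) = 2"
proof (induct u arbitrary: \<eta>)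
  case 0
  thus ?case by simp
next
  case (Suc u)
  have e2: "\<eta> ^ (2 * 2^u) = -1" using Suc.prems by simp
  have "(\<Prod>i<2^Suc u. (1 - \<eta>^(2*i+1))) = (\<Prod>i<2^u. (1 - \<eta>^(2*i+1)) * (1 - \<eta>^(2*(i+2^u)+1)))"
    using prod_pairs[where K="2^u" and f="\<lambda>i. 1 - \<eta>^(2*i+1)"] by simp
  also have "\<dots> = (\<Prod>i<2^u. (1 - (\<eta>^2)^(2*i+1)))"
  proof (rule prod.cong[OF refl])
    fix i
    have "\<eta>^(2*(i+2^u)+1) = \<eta>^(2*i+1) * \<eta> ^ (2 * 2^u)"
      by (simp add: power_add[symmetric] algebra_simps)
    hence "\<eta>^(2*(i+2^u)+1) = -(\<eta>^(2*i+1))" using e2 by simp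
    moreover have "(\<eta>^2)^(2*i+1) = \<eta>^(2*i+1) * \<eta>^(2*i+1)"
      by (simp add: power_mult[symmetric] power_add[symmetric] mult_2)
    ultimately show "(1 - \<eta>^(2*i+1)) * (1 - \<eta>^(2*(i+2^u)+1)) = 1 - (\<eta>^2)^(2*i+1)"
      by (simp add: algebra_simps)
  qed
  also have "\<dots> = 2"
    by (rule Suc.hyps) (use e2 in \<open>simp add: power_mult[symmetric] mult.commute\<close>)
  finally show ?case .
qed

lemma prod_F: "(\<xi>::complex) ^ (2^u) = -1 \<Longrightarrow> u \<ge> 1 \<Longrightarrow> (\<Prod>i<2^u. (1 + \<xi>^(2*i+1))) = 2"
proof -
  assume a: "\<xi> ^ (2^u) = -1" "u \<ge> 1"
  then obtain u' where u: "u = Suc u'" by (cases u) auto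
  have e2: "\<xi> ^ (2 * 2^u') = -1" using a u by simp
  have "(\<Prod>i<2^u. (1 + \<xi>^(2*i+1))) = (\<Prod>i<2^u'. (1 + \<xi>^(2*i+1)) * (1 + \<xi>^(2*(i+2^u')+1)))"
    using prod_pairs[where K="2^u'" and f="\<lambda>i. 1 + \<xi>^(2*i+1)"] u by simp
  also have "\<dots> = (\<Prod>i<2^u'. (1 - (\<xi>^2)^(2*i+1)))"
  proof (rule prod.cong[OF refl])
    fix i
    have "\<xi>^(2*(i+2^u')+1) = \<xi>^(2*i+1) * \<xi> ^ (2 * 2^u')"
      by (simp add: power_add[symmetric] algebra_simps)
    hence "\<xi>^(2*(i+2^u')+1) = -(\<xi>^(2*i+1))" using e2 by simp
    moreover have "(\<xi>^2)^(2*i+1) = \<xi>^(2*i+1) * \<xi>^(2*i+1)"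
      by (simp add: power_mult[symmetric] power_add[symmetric] mult_2)
    ultimately show "(1 + \<xi>^(2*i+1)) * (1 + \<xi>^(2*(i+2^u')+1)) = 1 - (\<xi>^2)^(2*i+1)"
      by (simp add: algebra_simps)
  qed
  also have "\<dots> = 2"
    by (rule prod_H) (use e2 in \<open>simp add: power_mult[symmetric] mult.commute\<close>)
  finally show ?thesis .
qed

lemma two_part:
  fixes \<xi> :: complex
  assumes "\<xi> ^ (2^u) = -1" "u \<ge> 1" "algebraic_int \<xi>"
  shows "\<exists>W. algebraic_int W \<and> (1 + \<xi>) ^ (2^u) * W = 2"
proof -
  define W where "W = (\<Prod>i<(2::nat)^u. (\<Sum>j<2*i+1. (-\<xi>)^j))"
  have fac: "1 + \<xi>^(2*i+1) = (1 + \<xi>) * (\<Sum>j<2*i+1. (-\<xi>)^j)" for i :: nat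
  proof -
    have "1 - (-\<xi>)^(2*i+1) = (1 - (-\<xi>)) * (\<Sum>j<2*i+1. (-\<xi>)^j)"
      by (rule one_diff_power_eq)
    thus ?thesis by simp
  qed
  have "(1 + \<xi>) ^ (2^u) * W = (\<Prod>i<(2::nat)^u. (1 + \<xi>) * (\<Sum>j<2*i+1. (-\<xi>)^j))"
    unfolding W_def by (simp add: prod.distrib)
  also have "\<dots> = (\<Prod>i<(2::nat)^u. (1 + \<xi>^(2*i+1)))" using fac by simp
  also have "\<dots> = 2" using prod_F assms by simp
  finally have "(1 + \<xi>) ^ (2^u) * W = 2" .
  moreover have "algebraic_int W" unfolding W_def using assms(3)
    by (intro algebraic_int_prod algebraic_int_sum algebraic_int_power) auto
  ultimately show ?thesis by blast
qed

lemma unit_part: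
  fixes \<theta> \<rho> :: complex
  assumes "\<theta> ^ (2*M) = \<rho>" "\<rho> ^ m = 1" "\<rho> \<noteq> 1" "algebraic_int \<theta>"
  shows "\<exists>E. algebraic_int E \<and> (1 + \<theta>) * E = of_nat m"
proof -
  have g0: "(\<Sum>j<m. \<rho>^j) = 0"
  proof -
    have "1 - \<rho>^m = (1 - \<rho>) * (\<Sum>j<m. \<rho>^j)" by (rule one_diff_power_eq)
    thus ?thesis using assms(2,3) by simp
  qed
  have "of_nat m = (\<Sum>j<m. (1 - \<rho>^j))" using g0 by (simp add: sum_subtractf)
  also have "\<dots> = (\<Sum>j<m. (1 - \<rho>) * (\<Sum>i<j. \<rho>^i))"
    by (rule sum.cong[OF refl], rule one_diff_power_eq)
  also have "\<dots> = (1 - \<rho>) * (\<Sum>j<m. \<Sum>i<j. \<rho>^i)" by (simp add: sum_distrib_left)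
  finally have m: "of_nat m = (1 - \<rho>) * (\<Sum>j<m. \<Sum>i<j. \<rho>^i)" .
  have "1 - \<rho> = 1 - (\<theta>^2)^M" using assms(1) by (simp add: power_mult)
  also have "\<dots> = (1 - \<theta>^2) * (\<Sum>i<M. (\<theta>^2)^i)" by (rule one_diff_power_eq)
  also have "1 - \<theta>^2 = (1 + \<theta>) * (1 - \<theta>)" by (simp add: algebra_simps power2_eq_square)
  finally have r: "1 - \<rho> = (1 + \<theta>) * ((1 - \<theta>) * (\<Sum>i<M. (\<theta>^2)^i))" by (simp add: mult.assoc)
  define E where "E = ((1 - \<theta>) * (\<Sum>i<M. (\<theta>^2)^i)) * (\<Sum>j<m. \<Sum>i<j. \<rho>^i)"
  have "(1 + \<theta>) * E = of_nat m" unfolding E_def m r by (simp add: mult.assoc)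
  moreover have "algebraic_int \<rho>" using assms(1,4) by auto
  hence "algebraic_int E" unfolding E_def using assms(4)
    by (intro algebraic_int_mult algebraic_int_sum algebraic_int_power algebraic_int_diff) auto
  ultimately show ?thesis by blast
qed



definition ee :: "int \<Rightarrow> int \<Rightarrow> complex" where
  "ee n v = cis (2 * pi * of_int v / of_int n)"

lemma ee_add: "ee n (u + v) = ee n u * ee n v"
  unfolding ee_def by (simp add: cis_mult add_divide_distrib distrib_left)

lemma ee_pow: "ee n v ^ k = ee n (v * int k)"
  unfolding ee_def DeMoivre by (simp add: algebra_simps)

lemma ee_mult_n: "n \<noteq> 0 \<Longrightarrow> ee n (n * j) = 1"
proof -
  assume n: "n \<noteq> 0"
  have "2 * pi * of_int (n * j) / of_int n = 2 * pi * of_int j" using n by simp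
  thus ?thesis unfolding ee_def by simp
qed

lemma ee_zero[simp]: "ee n 0 = 1" unfolding ee_def by simp

lemma ee_mod: "n \<noteq> 0 \<Longrightarrow> ee n (v mod n) = ee n v"
proof -
  assume n: "n \<noteq> 0"
  have "ee n v = ee n (v mod n + n * (v div n))" by simp
  also have "\<dots> = ee n (v mod n)" using ee_mult_n[OF n] by (simp only: ee_add) simp
  finally show ?thesis by simp
qed

lemma ee_one_dvd: assumes "n > 0" "ee n v = 1" shows "n dvd v"
proof -
  have "cos (2 * pi * of_int v / of_int n) = 1" using assms(2) unfolding ee_def
    by (metis cis.sel(1) one_complex.sel(1))
  then obtain k :: int where k: "2 * pi * of_int v / of_int n = of_int k * 2 * pi"
    unfolding cos_one_2pi_int by blast
  hence "of_int v = of_int k * (of_int n :: real)" using assms(1) by (simp add: field_simps)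
  hence "v = k * n" by (metis of_int_eq_iff of_int_mult)
  thus ?thesis by simp
qed

lemma ee_half: assumes "n = 2 * L" "L \<noteq> 0" "odd q" shows "ee n (L * q) = -1"
proof -
  obtain j where j: "q = 2 * j + 1" using assms(3) by (metis oddE)
  have "2 * pi * of_int (L * q) / of_int n = 2 * pi * of_int j + pi"
    using assms(1,2) j by (simp add: field_simps)
  hence "ee n (L * q) = cis (2 * pi * of_int j + pi)" unfolding ee_def by simp
  also have "\<dots> = cis (2 * pi * of_int j) * cis pi" by (rule cis_mult[symmetric])
  also have "cis (2 * pi * of_int j) = 1" by (rule cis_multiple_2pi) simp
  finally show ?thesis by simp
qed

lemma ee_alg: assumes "n > 0" shows "algebraic_int (ee n v)"
proof (rule algebraic_int_root[where y = 1 and p = "monom 1 (nat n)"])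
  show "poly (monom 1 (nat n)) (ee n v) = 1"
    using assms ee_mult_n[of n v] by (simp add: poly_monom ee_pow mult.commute)
qed (use assms in \<open>auto simp: degree_monom_eq coeff_monom\<close>)

lemma ee_cnj: "cnj (ee n v) = ee n (- v)"
  unfolding ee_def by (simp add: cis_cnj)

lemma two_odd_decomp: "(x::int) \<noteq> 0 \<Longrightarrow> \<exists>v q. x = 2^v * q \<and> odd q"
proof (induct "nat \<bar>x\<bar>" arbitrary: x rule: less_induct)
  case less
  show ?case
  proof (cases "even x")
    case True
    then obtain y where y: "x = 2 * y" by (auto elim: evenE)
    hence "y \<noteq> 0" "nat \<bar>y\<bar> < nat \<bar>x\<bar>" using less.prems by auto
    then obtain v q where "y = 2^v * q" "odd q" using less.hyps by blast
    hence "x = 2^(Suc v) * q \<and> odd q" using y by simp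
    thus ?thesis by blast
  next
    case False
    hence "x = 2^0 * x \<and> odd x" by simp
    thus ?thesis by blast
  qed
qed

lemma good_unit:
  assumes n: "n = 2^s * m" "s \<ge> 1" "m > 0" "odd m" and x: "\<not> m dvd x"
  shows "\<exists>F. algebraic_int F \<and> (1 + ee n x) ^ P * F = of_int m ^ P * 2 ^ 0"
proof -
  have npos: "n > 0" using n by simp
  define \<rho> where "\<rho> = ee n (x * 2^s)"
  have s2: "(2::nat) * 2^(s-1) = 2^s" using n(2) by (cases s) auto
  have th: "ee n x ^ (2 * 2^(s-1)) = \<rho>"
    unfolding \<rho>_def ee_pow s2 by simp
  have e: "x * 2^s * int (nat m) = n * x" using n by simp
  have rm: "\<rho> ^ nat m = 1" unfolding \<rho>_def ee_pow e using ee_mult_n[of n x] npos by simp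
  have r1: "\<rho> \<noteq> 1"
  proof
    assume "\<rho> = 1"
    hence "n dvd x * 2^s" using ee_one_dvd[OF npos] unfolding \<rho>_def by blast
    hence "2^s * m dvd 2^s * x" using n(1) by (simp add: mult.commute)
    hence "m dvd x" by (subst (asm) dvd_mult_cancel_left) simp
    thus False using x by simp
  qed
  obtain E where E: "algebraic_int E" "(1 + ee n x) * E = of_nat (nat m)"
    using unit_part[OF th rm r1 ee_alg[OF npos]] by blast
  have "(1 + ee n x) ^ P * E ^ P = ((1 + ee n x) * E) ^ P" by (rule power_mult_distrib[symmetric])
  also have "\<dots> = of_int m ^ P" using E(2) n(3) by simp
  finally show ?thesis using E(1) by (intro exI[of _ "E ^ P"]) auto
qed

lemma good_two:
  assumes n: "n = 2^s * m" "m > 0" and x: "x = m * 2^v * q" "odd q" "v + 2 \<le> s"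
    and P: "P = 2^(s-1)"
  shows "\<exists>F. algebraic_int F \<and> (1 + ee n x) ^ P * F = of_int m ^ P * 2 ^ (2^v)"
proof -
  have npos: "n > 0" using n by simp
  define u where "u = s - 1 - v"
  have u1: "u \<ge> 1" unfolding u_def using x by simp
  have suv: "s - 1 = u + v" unfolding u_def using x by simp
  define L where "L = m * 2^(s-1)"
  have s2: "(2::int) * 2^(s-1) = 2^s" using x(3) by (cases s) auto
  have nL: "n = 2 * L" unfolding L_def n using s2 by (simp add: mult_ac)
  have e: "x * int (2^u) = L * q" unfolding x L_def suv by (simp add: power_add mult_ac)
  have "ee n x ^ (2^u) = ee n (L * q)" unfolding ee_pow e ..
  also have "\<dots> = -1" using ee_half[OF nL _ x(2)] n unfolding L_def by simp
  finally have xi: "ee n x ^ (2^u) = -1" .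
  obtain W where W: "algebraic_int W" "(1 + ee n x) ^ (2^u) * W = 2"
    using two_part[OF xi u1 ee_alg[OF npos]] by blast
  have PP: "P = 2^u * 2^v" unfolding P suv by (simp add: power_add)
  have "(1 + ee n x) ^ P * (of_int m ^ P * W ^ (2^v)) = of_int m ^ P * (((1 + ee n x) ^ (2^u)) ^ (2^v) * W ^ (2^v))"
    unfolding PP power_mult by (simp add: mult_ac)
  also have "((1 + ee n x) ^ (2^u)) ^ (2^v) * W ^ (2^v) = ((1 + ee n x) ^ (2^u) * W) ^ (2^v)"
    by (rule power_mult_distrib[symmetric])
  also have "\<dots> = 2 ^ (2^v)" using W(2) by simp
  finally show ?thesis using W(1) by (intro exI[of _ "of_int m ^ P * W ^ (2^v)"]) auto
qed

lemma final_contra: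
  fixes Y z F1 F2 \<theta>1 \<theta>2 :: complex and m :: int
  assumes alg: "algebraic_int Y" "algebraic_int z" "algebraic_int F1" "algebraic_int F2"
    and Yz: "Y * z = (1 + \<theta>1) * (1 + \<theta>2) / 2"
    and g1: "(1 + \<theta>1) ^ P * F1 = of_int m ^ P * 2 ^ f1"
    and g2: "(1 + \<theta>2) ^ P * F2 = of_int m ^ P * 2 ^ f2"
    and f: "f1 + f2 < P" and m: "odd m"
  shows False
proof -
  define k where "k = P - f1 - f2"
  have Pk: "P = k + f1 + f2" "k \<ge> 1" unfolding k_def using f by auto
  have "(Y * z) ^ P = ((1 + \<theta>1) * (1 + \<theta>2)) ^ P / 2 ^ P"
    unfolding Yz by (rule power_divide)
  also have "\<dots> = (1 + \<theta>1) ^ P * (1 + \<theta>2) ^ P / 2 ^ P"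
    by (simp only: power_mult_distrib)
  finally have "(Y * z) ^ P * F1 * F2 = ((1 + \<theta>1) ^ P * F1) * ((1 + \<theta>2) ^ P * F2) / 2 ^ P"
    by (simp add: mult_ac)
  also have "\<dots> = (of_int m ^ P * of_int m ^ P) * (2 ^ f1 * 2 ^ f2) / (2 ^ k * (2 ^ f1 * 2 ^ f2))"
    unfolding g1 g2 by (simp add: Pk(1) power_add mult_ac)
  also have "\<dots> = (of_int m ^ P * of_int m ^ P) / 2 ^ k"
    by simp
  also have "\<dots> = of_int (m ^ (2 * P)) / 2 ^ k"
    by (simp add: mult_2 power_add)
  finally have eq: "(Y * z) ^ P * F1 * F2 = of_int (m ^ (2 * P)) / 2 ^ k" .
  have "algebraic_int ((Y * z) ^ P * F1 * F2)" using alg by auto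
  hence ai: "algebraic_int (of_int (m ^ (2 * P)) / 2 ^ k :: complex)" using eq by simp
  have "(of_int (m ^ (2 * P)) / 2 ^ k :: complex) = of_rat (of_int (m ^ (2 * P)) / 2 ^ k)"
    by (simp add: of_rat_divide of_rat_power)
  hence "(of_int (m ^ (2 * P)) / 2 ^ k :: complex) \<in> \<rat>" by (metis Rats_of_rat)
  hence "(of_int (m ^ (2 * P)) / 2 ^ k :: complex) \<in> \<int>" using rational_algebraic_int_is_int ai by blast
  then obtain j where j: "(of_int (m ^ (2 * P)) / 2 ^ k :: complex) = of_int j" by (auto elim: Ints_cases)
  hence "(of_int (m ^ (2 * P)) :: complex) = of_int j * 2 ^ k" by (simp add: divide_eq_eq)
  hence "(of_int (m ^ (2 * P)) :: complex) = of_int (j * 2 ^ k)" by simp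
  hence mj: "m ^ (2 * P) = j * 2 ^ k" by (simp only: of_int_eq_iff)
  have "(2::int) dvd 2 ^ k" using Pk(2) by (simp add: dvd_power_iff_le)
  hence "even (m ^ (2 * P))" unfolding mj by simp
  thus False using m by simp
qed



lemma odd_dvd_2: "odd (m::int) \<Longrightarrow> m dvd 2 * a \<Longrightarrow> m dvd a"
proof -
  assume "odd m" "m dvd 2 * a"
  moreover have "coprime m 2" using \<open>odd m\<close> by (simp add: coprime_commute)
  ultimately show ?thesis using coprime_dvd_mult_right_iff by blast
qed

lemma decomp_small:
  fixes x m L :: int
  assumes "x \<noteq> 0" "m dvd x" "L = m * 2^(s-1)" "\<not> L dvd x" "s \<ge> 1"
  shows "\<exists>v q. x = m * 2^v * q \<and> odd q \<and> v + 2 \<le> s"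
proof -
  obtain x' where x': "x = m * x'" using assms(2) by blast
  hence "x' \<noteq> 0" using assms(1) by auto
  then obtain v q where vq: "x' = 2^v * q" "odd q" using two_odd_decomp by blast
  have "v + 2 \<le> s"
  proof (rule ccontr)
    assume "\<not> v + 2 \<le> s"
    hence "v = (s - 1) + (v - (s - 1))" by simp
    hence "x = L * (2^(v - (s-1)) * q)" using x' vq assms(3) by (metis mult.assoc power_add)
    thus False using assms(4) by simp
  qed
  thus ?thesis using x' vq by (auto simp: mult.assoc)
qed

lemma both_bound:
  fixes a b m :: int
  assumes n: "2 * l = 2^s * m" "odd m" "m > 0" "s \<ge> 2"
    and c: "b - a = m * 2^vc * qc" "odd qc" "vc + 2 \<le> s"
    and d: "a + b = m * 2^vd * qd" "odd qd" "vd + 2 \<le> s"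
    and ab: "1 \<le> a" "a < l" "1 \<le> b" "b < l" "a \<noteq> b"
    and gcd: "\<And>g. g dvd a \<Longrightarrow> g dvd b \<Longrightarrow> g dvd 2 * l \<Longrightarrow> g dvd 1"
  shows "(2::nat)^vc + 2^vd < 2^(s-1)"
proof -
  have "m dvd 2 * a"
  proof -
    have "2 * a = m * (2^vd * qd - 2^vc * qc)" using c(1) d(1) by (simp add: algebra_simps)
    thus ?thesis by simp
  qed
  hence ma: "m dvd a" using odd_dvd_2 n(2) by blast
  have "m dvd 2 * b"
  proof -
    have "2 * b = m * (2^vd * qd + 2^vc * qc)" using c(1) d(1) by (simp add: algebra_simps)
    thus ?thesis by simp
  qed
  hence mb: "m dvd b" using odd_dvd_2 n(2) by blast
  have "m dvd 2 * l" using n(1) by simp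
  hence "m dvd 1" using gcd ma mb by blast
  hence m1: "m = 1" using n(3) by (simp add: zdvd1_eq)
  have sum: "(b - a) + (a + b) = 2 * b" by simp
  show ?thesis
  proof (cases "vc = 0")
    case vc0: True
    show ?thesis
    proof (cases "vd = 0")
      case True
      have "s \<noteq> 2"
      proof
        assume "s = 2"
        hence "l = 2" using n(1) m1 by simp
        thus False using ab by simp
      qed
      hence "s \<ge> 3" using n(4) by simp
      hence "(2::nat)^2 \<le> 2^(s-1)" by (intro power_increasing) auto
      thus ?thesis using vc0 True by simp
    next
      case False
      hence "even (a + b)" using d(1) by (cases vd) auto
      moreover have "odd (b - a)" using c(1,2) vc0 m1 by simp
      ultimately show ?thesis using sum by (metis even_add even_mult_iff even_numeral)
    qed
  next
    case vcpos: False
    show ?thesis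
    proof (cases "vd = 0")
      case True
      hence "odd (a + b)" using d(1,2) m1 by simp
      moreover have "even (b - a)" using c(1) vcpos by (cases vc) auto
      ultimately show ?thesis using sum by (metis even_add even_mult_iff even_numeral)
    next
      case vdpos: False
      have ceven: "even (b - a)" using c(1) vcpos by (cases vc) auto
      have not_even_b: "\<not> (even b)"
      proof
        assume eb: "even b"
        hence "even a" using ceven by (metis dvd_diff add_diff_cancel_left' diff_add_cancel)
        moreover have "(2::int) dvd 2 * l" by simp
        ultimately have "(2::int) dvd 1" using gcd eb by blast
        thus False by simp
      qed
      have key: "\<not> (4 dvd (b - a) \<and> 4 dvd (a + b))"
      proof
        assume "4 dvd (b - a) \<and> 4 dvd (a + b)"
        hence "(4::int) dvd 2 * b" using sum by (metis dvd_add)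
        hence "even b" by auto
        thus False using not_even_b by simp
      qed
      have key2: "\<not> (vc = 1 \<and> vd = 1)"
      proof
        assume "vc = 1 \<and> vd = 1"
        hence "2 * b = 2 * (qc + qd)" using c(1) d(1) m1 sum by simp
        hence "b = qc + qd" by simp
        hence "even b" using c(2) d(2) by simp
        thus False using not_even_b by simp
      qed
      have d4: "4 dvd m * 2^v * q" if "v \<ge> 2" for v and q :: int
      proof -
        have "(2::int)^v = 2^2 * 2^(v-2)" using that by (metis le_add_diff_inverse power_add)
        thus ?thesis by simp
      qed
      have "(vc = 1 \<and> vd \<ge> 2) \<or> (vd = 1 \<and> vc \<ge> 2)"
      proof (cases "vc \<ge> 2")
        case True
        hence "4 dvd (b - a)" using d4[of vc qc] c(1) by simp
        hence "\<not> vd \<ge> 2" using key d4[of vd qd] d(1) by auto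
        thus ?thesis using True vdpos by simp
      next
        case False
        hence "vc = 1" using vcpos by simp
        thus ?thesis using key2 vdpos by simp
      qed
      moreover have "(2::nat) + 2^w < 2^(s-1)" if "w \<ge> 2" "w + 2 \<le> s" for w
      proof -
        have "(2::nat)^w \<ge> 2^2" using that by (intro power_increasing) auto
        moreover have "(2::nat)^(w+1) \<le> 2^(s-1)" using that by (intro power_increasing) auto
        ultimately show ?thesis by simp
      qed
      ultimately show ?thesis using c(3) d(3) by (auto simp: add.commute)
    qed
  qed
qed



lemma good_data:
  fixes x m :: int
  assumes n: "n = 2^s * m" "s \<ge> 2" "m > 0" "odd m" and P: "P = 2^(s-1)"
    and x: "x \<noteq> 0" "\<not> (m * 2^(s-1)) dvd x"
  shows "\<exists>f F. algebraic_int F \<and> (1 + ee n x) ^ P * F = of_int m ^ P * 2 ^ f \<and>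
     (m dvd x \<longrightarrow> (\<exists>v q. x = m * 2^v * q \<and> odd q \<and> v + 2 \<le> s \<and> f = 2^v)) \<and>
     (\<not> m dvd x \<longrightarrow> f = 0)"
proof (cases "m dvd x")
  case True
  then obtain v q where vq: "x = m * 2^v * q" "odd q" "v + 2 \<le> s"
    using decomp_small[OF x(1) True refl x(2)] n(2) by auto
  obtain F where "algebraic_int F" "(1 + ee n x) ^ P * F = of_int m ^ P * 2 ^ (2^v)"
    using good_two[OF n(1) n(3) vq P] by blast
  thus ?thesis using vq True by blast
next
  case False
  obtain F where "algebraic_int F" "(1 + ee n x) ^ P * F = of_int m ^ P * 2 ^ 0"
    using good_unit[OF n(1) _ n(3) n(4) False] n(2) by auto
  thus ?thesis using False by blast
qed

lemma main_nt:
  fixes l a b :: int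
  assumes l: "l \<ge> 2" "even l" and ab: "1 \<le> a" "a < l" "1 \<le> b" "b < l" "a \<noteq> b" "a + b \<noteq> l"
    and gcd: "\<And>g. g dvd a \<Longrightarrow> g dvd b \<Longrightarrow> g dvd 2 * l \<Longrightarrow> g dvd 1"
  shows "\<not> algebraic_int ((ee (2*l) a + ee (2*l) (-a) + ee (2*l) b + ee (2*l) (-b)) / 2)"
proof
  define n where "n = 2 * l"
  assume Y: "algebraic_int ((ee (2*l) a + ee (2*l) (-a) + ee (2*l) b + ee (2*l) (-b)) / 2)"
  have npos: "n > 0" unfolding n_def using l by simp
  obtain s m where sm: "n = 2^s * m" "odd m" using two_odd_decomp[of n] npos by auto
  have mpos: "m > 0"
  proof -
    have "0 < 2^s * m" using sm npos by simp
    thus ?thesis by (simp add: zero_less_mult_iff)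
  qed
  have s2: "s \<ge> 2"
  proof (rule ccontr)
    assume "\<not> s \<ge> 2"
    hence "s = 0 \<or> s = 1" by auto
    thus False
    proof
      assume "s = 0" thus False using sm unfolding n_def by auto
    next
      assume "s = 1" hence "l = m" using sm unfolding n_def by simp
      thus False using sm l by simp
    qed
  qed
  define P where "P = (2::nat)^(s-1)"
  have lL: "l = m * 2^(s-1)"
  proof -
    have "(2::int) * 2^(s-1) = 2^s" using s2 by (cases s) auto
    hence "2 * l = 2 * (m * 2^(s-1))" using sm unfolding n_def by (simp add: mult_ac)
    thus ?thesis by simp
  qed
  define c where "c = b - a"
  define d where "d = a + b"
  have c0: "c \<noteq> 0" "\<not> (m * 2^(s-1)) dvd c"
  proof -
    show "c \<noteq> 0" unfolding c_def using ab by simp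
    show "\<not> (m * 2^(s-1)) dvd c"
    proof
      assume "(m * 2^(s-1)) dvd c"
      hence "l dvd c" using lL by simp
      then obtain k where k: "c = l * k" by blast
      have "k \<noteq> 0" using k \<open>c \<noteq> 0\<close> by auto
      hence "\<bar>c\<bar> \<ge> l" using k l by (simp add: abs_mult)
      thus False unfolding c_def using ab by simp
    qed
  qed
  have d0: "d \<noteq> 0" "\<not> (m * 2^(s-1)) dvd d"
  proof -
    show "d \<noteq> 0" unfolding d_def using ab by simp
    show "\<not> (m * 2^(s-1)) dvd d"
    proof
      assume "(m * 2^(s-1)) dvd d"
      hence "l dvd d" using lL by simp
      then obtain k where k: "d = l * k" by blast
      have lk: "l * k = a + b" using k unfolding d_def by simp
      have kk: "0 < l * k" "l * k < l * 2" unfolding lk using ab by auto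
      have "0 < k" using kk(1) l by (simp add: zero_less_mult_iff)
      moreover have "k < 2" using kk(2) l by (simp add: mult_less_cancel_left)
      ultimately have "k = 1" by simp
      thus False using k ab unfolding d_def by simp
    qed
  qed
  obtain fc Fc where Fc: "algebraic_int Fc" "(1 + ee n c) ^ P * Fc = of_int m ^ P * 2 ^ fc"
     "m dvd c \<longrightarrow> (\<exists>v q. c = m * 2^v * q \<and> odd q \<and> v + 2 \<le> s \<and> fc = 2^v)"
     "\<not> m dvd c \<longrightarrow> fc = 0"
    using good_data[OF sm(1) s2 mpos sm(2) P_def c0] by blast
  obtain fd Fd where Fd: "algebraic_int Fd" "(1 + ee n d) ^ P * Fd = of_int m ^ P * 2 ^ fd"
     "m dvd d \<longrightarrow> (\<exists>v q. d = m * 2^v * q \<and> odd q \<and> v + 2 \<le> s \<and> fd = 2^v)"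
     "\<not> m dvd d \<longrightarrow> fd = 0"
    using good_data[OF sm(1) s2 mpos sm(2) P_def d0] by blast
  have half: "(2::nat)^v < P" if "v + 2 \<le> s" for v
    unfolding P_def using that by (intro power_strict_increasing) auto
  have "fc + fd < P"
  proof (cases "m dvd c")
    case mc: True
    then obtain vc qc where vc: "c = m * 2^vc * qc" "odd qc" "vc + 2 \<le> s" "fc = 2^vc" using Fc(3) by blast
    show ?thesis
    proof (cases "m dvd d")
      case True
      then obtain vd qd where vd: "d = m * 2^vd * qd" "odd qd" "vd + 2 \<le> s" "fd = 2^vd" using Fd(3) by blast
      have "2 * l = 2^s * m" using sm unfolding n_def by simp
      from both_bound[OF this sm(2) mpos s2 vc(1)[unfolded c_def] vc(2,3) vd(1)[unfolded d_def] vd(2,3) ab(1-5) gcd]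
      show ?thesis unfolding P_def vc(4) vd(4) by blast
    next
      case False thus ?thesis using Fd(4) vc half by simp
    qed
  next
    case False
    hence fc0: "fc = 0" using Fc(4) by simp
    show ?thesis
    proof (cases "m dvd d")
      case True
      then obtain vd qd where vd: "d = m * 2^vd * qd" "odd qd" "vd + 2 \<le> s" "fd = 2^vd" using Fd(3) by blast
      thus ?thesis using fc0 half by simp
    next
      case False thus ?thesis using Fd(4) fc0 P_def by simp
    qed
  qed
  have Yz: "(ee n a + ee n (-a) + ee n b + ee n (-b)) / 2 * ee n b = (1 + ee n c) * (1 + ee n d) / 2"
  proof -
    have "ee n c * ee n d = ee n b * ee n b" unfolding c_def d_def ee_add[symmetric] by (simp add: algebra_simps)
    moreover have "ee n a * ee n b = ee n d" "ee n (-a) * ee n b = ee n c" "ee n (-b) * ee n b = 1"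
      unfolding c_def d_def ee_add[symmetric] by (simp_all add: algebra_simps)
    ultimately show ?thesis by (simp add: field_simps)
  qed
  show False
    using final_contra[OF Y[folded n_def] ee_alg[OF npos] Fc(1) Fd(1) Yz Fc(2) Fd(2) \<open>fc + fd < P\<close> sm(2)] .
qed



lemma mvec_mmult: "mvec J (mmult J M N) v = mvec J M (mvec J N v)"
proof (rule ext)
  fix i
  have "mvec J (mmult J M N) v i = (\<Sum>k\<in>J. \<Sum>j\<in>J. M i j * N j k * v k)"
    unfolding mvec_def mmult_def by (simp add: sum_distrib_right)
  also have "\<dots> = (\<Sum>j\<in>J. \<Sum>k\<in>J. M i j * N j k * v k)" by (rule sum.swap)
  also have "\<dots> = mvec J M (mvec J N v) i"
    unfolding mvec_def by (simp add: sum_distrib_left mult.assoc)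
  finally show "mvec J (mmult J M N) v i = mvec J M (mvec J N v) i" .
qed

locale circ =
  fixes n :: int and S :: "int set"
  assumes npos: "n > 0" and Ssub: "S \<subseteq> {0..<n}" and Sneg: "\<And>s. s \<in> S \<Longrightarrow> (-s) mod n \<in> S"
    and reg: "\<And>x. x \<in> circ_verts n \<Longrightarrow> gdeg (circ_verts n) (circ_arcs n S) x = 4"
begin

abbreviation "V \<equiv> circ_verts n"
abbreviation "A \<equiv> circ_arcs n S"

lemma A_iff: "(x, y) \<in> A \<longleftrightarrow> x \<in> V \<and> y \<in> V \<and> (y - x) mod n \<in> S"
  unfolding circ_arcs_def by simp

lemma V_iff: "x \<in> V \<longleftrightarrow> 0 \<le> x \<and> x < n"
  unfolding circ_verts_def by simp

lemma finA: "finite A"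
proof -
  have "A \<subseteq> V \<times> V" unfolding circ_arcs_def by auto
  moreover have "finite V" unfolding circ_verts_def by simp
  ultimately show ?thesis by (meson finite_SigmaI finite_subset)
qed

lemma A_fst: "a \<in> A \<Longrightarrow> fst a \<in> V" and A_snd: "a \<in> A \<Longrightarrow> snd a \<in> V"
  unfolding circ_arcs_def by auto

lemma A_sym: assumes "a \<in> A" shows "prod.swap a \<in> A"
proof -
  obtain x y where a: "a = (x, y)" by (cases a)
  have "(y - x) mod n \<in> S" "x \<in> V" "y \<in> V" using assms a A_iff by auto
  moreover have "(x - y) mod n = (- ((y - x) mod n)) mod n" by (simp add: mod_minus_eq)
  ultimately show ?thesis using a A_iff Sneg by auto
qed

lemma swap_bij: "bij_betw prod.swap A A"
  by (rule bij_betwI[where g = prod.swap]) (auto simp: A_sym)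

lemma sum_swap_A: "(\<Sum>a\<in>A. f (prod.swap a)) = (\<Sum>a\<in>A. f a)"
  using sum.reindex_bij_betw[OF swap_bij, of f] by simp

lemma out_set: assumes u: "u \<in> V"
  shows "{a \<in> A. fst a = u} = (\<lambda>s. (u, (u + s) mod n)) ` S"
proof
  show "{a \<in> A. fst a = u} \<subseteq> (\<lambda>s. (u, (u + s) mod n)) ` S"
  proof
    fix a assume "a \<in> {a \<in> A. fst a = u}"
    then obtain y where a: "a = (u, y)" "(u, y) \<in> A" by (cases a) auto
    hence y: "y \<in> V" "(y - u) mod n \<in> S" using A_iff by auto
    have "(u + (y - u) mod n) mod n = y mod n" by (simp add: mod_simps)
    also have "\<dots> = y" using y(1) V_iff by simp
    finally show "a \<in> (\<lambda>s. (u, (u + s) mod n)) ` S" using a y by (auto intro!: image_eqI[of _ _ "(y - u) mod n"])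
  qed
next
  show "(\<lambda>s. (u, (u + s) mod n)) ` S \<subseteq> {a \<in> A. fst a = u}"
  proof
    fix a assume "a \<in> (\<lambda>s. (u, (u + s) mod n)) ` S"
    then obtain s where s: "s \<in> S" "a = (u, (u + s) mod n)" by auto
    have "((u + s) mod n - u) mod n = s mod n" by (simp add: mod_simps)
    also have "\<dots> = s" using s(1) Ssub by auto
    finally show "a \<in> {a \<in> A. fst a = u}" using s u npos A_iff V_iff by auto
  qed
qed

lemma out_inj: "inj_on (\<lambda>s. (u, (u + s) mod n)) S"
proof
  fix s t assume st: "s \<in> S" "t \<in> S" "(u, (u + s) mod n) = (u, (u + t) mod n)"
  hence "(u + s) mod n = (u + t) mod n" by simp
  hence "s mod n = t mod n" by (metis add_diff_cancel_left' mod_diff_left_eq)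
  moreover have "s \<in> {0..<n}" "t \<in> {0..<n}" using st(1,2) Ssub by auto
  ultimately show "s = t" by simp
qed

lemma out_sum: assumes u: "u \<in> V"
  shows "(\<Sum>a\<in>A. if fst a = u then g (snd a) else 0) = (\<Sum>s\<in>S. g ((u + s) mod n))"
proof -
  have "(\<Sum>a\<in>A. if fst a = u then g (snd a) else 0) = (\<Sum>a\<in>{a \<in> A. fst a = u}. g (snd a))"
    using finA by (simp add: sum.inter_filter)
  also have "\<dots> = (\<Sum>s\<in>S. g ((u + s) mod n))"
    unfolding out_set[OF u] by (subst sum.reindex[OF out_inj]) simp
  finally show ?thesis .
qed

lemma in_sum: "(\<Sum>a\<in>A. if snd a = u then g (fst a) else 0) = (\<Sum>a\<in>A. if fst a = u then g (snd a) else 0)"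
proof -
  have "(\<Sum>a\<in>A. if snd a = u then g (fst a) else 0) = (\<Sum>a\<in>A. (\<lambda>a. if fst a = u then g (snd a) else 0) (prod.swap a))"
    by (rule sum.cong) (auto simp: prod.swap_def)
  also have "\<dots> = (\<Sum>a\<in>A. if fst a = u then g (snd a) else 0)" by (rule sum_swap_A)
  finally show ?thesis .
qed

lemma finS: "finite S" using Ssub finite_subset by blast

lemma cardS: "card S = 4"
proof -
  have 0: "0 \<in> V" using npos V_iff by simp
  have "{y \<in> V. (0, y) \<in> A} = S"
  proof -
    have "\<And>y. y \<in> V \<Longrightarrow> y mod n = y" using V_iff by simp
    thus ?thesis using Ssub A_iff 0 V_iff by auto
  qed
  thus ?thesis using reg[OF 0] unfolding gdeg_def by simp
qed

lemma bdry_val: assumes "x \<in> V" shows "bdry V A x a = (if x = snd a then 1/2 else 0)"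
proof -
  have g: "gdeg V A x = 4" using reg[OF assms] .
  show ?thesis unfolding bdry_def g by simp
qed

lemma dstar_val: assumes "x \<in> V"
  shows "mvec V (conj_transpose (bdry V A)) (unitvec x) a = (if snd a = x then 1/2 else 0)"
proof -
  have "mvec V (conj_transpose (bdry V A)) (unitvec x) a = (\<Sum>v\<in>V. if v = x then cnj (bdry V A v a) else 0)"
    unfolding mvec_def conj_transpose_def unitvec_def by (intro sum.cong) auto
  also have "\<dots> = cnj (bdry V A x a)" using assms by (simp add: sum.delta circ_verts_def)
  finally show ?thesis using bdry_val[OF assms] by auto
qed

lemma dd_val: assumes "c \<in> A"
  shows "mmult V (conj_transpose (bdry V A)) (bdry V A) c b = (if snd c = snd b then 1/4 else 0)"
proof -
  have sc: "snd c \<in> V" using A_snd[OF assms] .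
  have "mmult V (conj_transpose (bdry V A)) (bdry V A) c b
      = (\<Sum>v\<in>V. if v = snd c then (if v = snd b then 1/4 else 0) else 0)"
    unfolding mmult_def conj_transpose_def by (intro sum.cong refl) (auto simp: bdry_val)
  also have "\<dots> = (if snd c = snd b then 1/4 else 0)" using sc by (simp add: sum.delta circ_verts_def)
  finally show ?thesis .
qed

lemma U_val: assumes "a \<in> A" "b \<in> A"
  shows "walkU V A a b = (if fst a = snd b then 1/2 else 0) - (if b = prod.swap a then 1 else 0)"
proof -
  have sa: "prod.swap a \<in> A" using A_sym[OF assms(1)] .
  have "walkU V A a b = (\<Sum>c\<in>A. if c = prod.swap a then
          (2 * mmult V (conj_transpose (bdry V A)) (bdry V A) c b - idmat c b) else 0)"
    unfolding walkU_def mmult_def shiftR_def by (intro sum.cong refl) auto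
  also have "\<dots> = 2 * mmult V (conj_transpose (bdry V A)) (bdry V A) (prod.swap a) b - idmat (prod.swap a) b"
    using sa finA by (simp add: sum.delta)
  also have "\<dots> = (if fst a = snd b then 1/2 else 0) - (if b = prod.swap a then 1 else 0)"
    unfolding dd_val[OF sa] idmat_def by (cases a) auto
  finally show ?thesis .
qed

lemma U_apply: assumes "a \<in> A"
  shows "mvec A (walkU V A) \<psi> a = (1/2) * (\<Sum>b\<in>A. if snd b = fst a then \<psi> b else 0) - \<psi> (prod.swap a)"
proof -
  have "mvec A (walkU V A) \<psi> a = (\<Sum>b\<in>A. (if snd b = fst a then 1/2 * \<psi> b else 0) - (if b = prod.swap a then \<psi> b else 0))"
    unfolding mvec_def using U_val[OF assms] by (intro sum.cong refl) (auto simp: left_diff_distrib)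
  also have "\<dots> = (\<Sum>b\<in>A. if snd b = fst a then 1/2 * \<psi> b else 0) - (\<Sum>b\<in>A. if b = prod.swap a then \<psi> b else 0)"
    by (rule sum_subtractf)
  also have "(\<Sum>b\<in>A. if b = prod.swap a then \<psi> b else 0) = \<psi> (prod.swap a)"
    using A_sym[OF assms] finA by (simp add: sum.delta)
  also have "(\<Sum>b\<in>A. if snd b = fst a then 1/2 * \<psi> b else 0) = (1/2) * (\<Sum>b\<in>A. if snd b = fst a then \<psi> b else 0)"
    unfolding sum_distrib_left by (rule sum.cong) auto
  finally show ?thesis .
qed

end


fun Qf :: "nat \<Rightarrow> 'a::comm_ring_1 \<Rightarrow> 'a" where
  "Qf 0 y = 2"
| "Qf (Suc 0) y = y"
| "Qf (Suc (Suc t)) y = y * Qf (Suc t) y - Qf t y"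

context circ begin

definition "mu = (\<Sum>s\<in>S. ee n s)"
definition "alpha \<psi> = (\<Sum>a\<in>A. ee n (snd a) * \<psi> a)"
definition "beta \<psi> = (\<Sum>a\<in>A. ee n (fst a) * \<psi> a)"

lemma double_sum:
  fixes f \<psi> :: "int \<times> int \<Rightarrow> complex"
  shows "(\<Sum>a\<in>A. f a * (\<Sum>b\<in>A. if snd b = fst a then \<psi> b else 0)) = (\<Sum>b\<in>A. \<psi> b * (\<Sum>a\<in>A. if fst a = snd b then f a else 0))"
proof -
  have i1: "f a * (\<Sum>b\<in>A. if snd b = fst a then \<psi> b else 0) = (\<Sum>b\<in>A. if snd b = fst a then f a * \<psi> b else 0)" for a
    unfolding sum_distrib_left by (rule sum.cong) auto
  have i2: "\<psi> b * (\<Sum>a\<in>A. if fst a = snd b then f a else 0) = (\<Sum>a\<in>A. if snd b = fst a then f a * \<psi> b else 0)" for b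
    unfolding sum_distrib_left by (rule sum.cong) auto
  show ?thesis unfolding i1 i2 by (rule sum.swap)
qed

lemma out_ee: assumes "u \<in> V"
  shows "(\<Sum>a\<in>A. if fst a = u then ee n (snd a) else 0) = ee n u * mu"
proof -
  have "(\<Sum>a\<in>A. if fst a = u then ee n (snd a) else 0) = (\<Sum>s\<in>S. ee n ((u + s) mod n))"
    by (rule out_sum[OF assms])
  also have "\<dots> = (\<Sum>s\<in>S. ee n u * ee n s)" using npos by (simp add: ee_mod ee_add)
  finally show ?thesis unfolding mu_def by (simp add: sum_distrib_left)
qed

lemma out_const: fixes c :: complex assumes "u \<in> V"
  shows "(\<Sum>a\<in>A. if fst a = u then c else 0) = 4 * c"
proof -
  have "(\<Sum>a\<in>A. if fst a = u then (\<lambda>_. c) (snd a) else 0) = (\<Sum>s\<in>S. c)"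
    by (rule out_sum[OF assms])
  thus ?thesis using cardS by simp
qed

lemma alpha_U: "alpha (mvec A (walkU V A) \<psi>) = (mu / 2) * alpha \<psi> - beta \<psi>"
proof -
  have "alpha (mvec A (walkU V A) \<psi>) = (\<Sum>a\<in>A. ee n (snd a) * ((1/2) * (\<Sum>b\<in>A. if snd b = fst a then \<psi> b else 0) - \<psi> (prod.swap a)))"
    unfolding alpha_def by (intro sum.cong refl) (simp add: U_apply)
  also have "\<dots> = (1/2) * (\<Sum>a\<in>A. ee n (snd a) * (\<Sum>b\<in>A. if snd b = fst a then \<psi> b else 0)) - (\<Sum>a\<in>A. ee n (snd a) * \<psi> (prod.swap a))"
    by (simp add: right_diff_distrib sum_subtractf sum_distrib_left mult_ac)
  also have "(\<Sum>a\<in>A. ee n (snd a) * (\<Sum>b\<in>A. if snd b = fst a then \<psi> b else 0)) = (\<Sum>b\<in>A. \<psi> b * (ee n (snd b) * mu))"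
    unfolding double_sum by (intro sum.cong refl) (simp add: out_ee A_snd)
  also have "(\<Sum>a\<in>A. ee n (snd a) * \<psi> (prod.swap a)) = beta \<psi>"
  proof -
    have "(\<Sum>a\<in>A. ee n (snd a) * \<psi> (prod.swap a)) = (\<Sum>a\<in>A. (\<lambda>a. ee n (fst a) * \<psi> a) (prod.swap a))"
      by (rule sum.cong) (auto simp: prod.swap_def)
    also have "\<dots> = beta \<psi>" unfolding beta_def by (rule sum_swap_A)
    finally show ?thesis .
  qed
  finally show ?thesis unfolding alpha_def by (simp add: sum_distrib_left mult_ac)
qed

lemma beta_U: "beta (mvec A (walkU V A) \<psi>) = alpha \<psi>"
proof -
  have "beta (mvec A (walkU V A) \<psi>) = (\<Sum>a\<in>A. ee n (fst a) * ((1/2) * (\<Sum>b\<in>A. if snd b = fst a then \<psi> b else 0) - \<psi> (prod.swap a)))"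
    unfolding beta_def by (intro sum.cong refl) (simp add: U_apply)
  also have "\<dots> = (1/2) * (\<Sum>a\<in>A. ee n (fst a) * (\<Sum>b\<in>A. if snd b = fst a then \<psi> b else 0)) - (\<Sum>a\<in>A. ee n (fst a) * \<psi> (prod.swap a))"
    by (simp add: right_diff_distrib sum_subtractf sum_distrib_left mult_ac)
  also have "(\<Sum>a\<in>A. ee n (fst a) * (\<Sum>b\<in>A. if snd b = fst a then \<psi> b else 0)) = (\<Sum>b\<in>A. \<psi> b * (4 * ee n (snd b)))"
  proof -
    have "(\<Sum>a\<in>A. ee n (fst a) * (\<Sum>b\<in>A. if snd b = fst a then \<psi> b else 0)) = (\<Sum>b\<in>A. \<psi> b * (\<Sum>a\<in>A. if fst a = snd b then ee n (fst a) else 0))"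
      by (rule double_sum)
    also have "\<dots> = (\<Sum>b\<in>A. \<psi> b * (\<Sum>a\<in>A. if fst a = snd b then ee n (snd b) else 0))"
      by (intro sum.cong refl arg_cong2[where f = "(*)"]) auto
    also have "\<dots> = (\<Sum>b\<in>A. \<psi> b * (4 * ee n (snd b)))"
      by (intro sum.cong refl) (simp add: out_const A_snd)
    finally show ?thesis .
  qed
  also have "(\<Sum>a\<in>A. ee n (fst a) * \<psi> (prod.swap a)) = alpha \<psi>"
  proof -
    have "(\<Sum>a\<in>A. ee n (fst a) * \<psi> (prod.swap a)) = (\<Sum>a\<in>A. (\<lambda>a. ee n (snd a) * \<psi> a) (prod.swap a))"
      by (rule sum.cong) (auto simp: prod.swap_def)
    also have "\<dots> = alpha \<psi>" unfolding alpha_def by (rule sum_swap_A)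
    finally show ?thesis .
  qed
  finally show ?thesis unfolding alpha_def by (simp add: sum_distrib_left mult_ac)
qed

lemma alpha_init: assumes "x \<in> V"
  shows "alpha (mvec V (conj_transpose (bdry V A)) (unitvec x)) = 2 * ee n x"
proof -
  have "alpha (mvec V (conj_transpose (bdry V A)) (unitvec x)) = (\<Sum>a\<in>A. if snd a = x then (\<lambda>_. ee n x / 2) (fst a) else 0)"
    unfolding alpha_def dstar_val[OF assms] by (intro sum.cong refl) auto
  also have "\<dots> = (\<Sum>a\<in>A. if fst a = x then ee n x / 2 else 0)" by (rule in_sum)
  also have "\<dots> = 2 * ee n x" using out_const[OF assms] by simp
  finally show ?thesis .
qed

lemma beta_init: assumes "x \<in> V"
  shows "beta (mvec V (conj_transpose (bdry V A)) (unitvec x)) = (mu / 2) * ee n x"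
proof -
  have "beta (mvec V (conj_transpose (bdry V A)) (unitvec x)) = (\<Sum>a\<in>A. if snd a = x then (\<lambda>v. ee n v / 2) (fst a) else 0)"
    unfolding beta_def dstar_val[OF assms] by (intro sum.cong refl) auto
  also have "\<dots> = (\<Sum>a\<in>A. if fst a = x then ee n (snd a) / 2 else 0)" by (rule in_sum)
  also have "\<dots> = (\<Sum>a\<in>A. if fst a = x then ee n (snd a) else 0) / 2"
    unfolding sum_divide_distrib by (intro sum.cong refl) auto
  also have "\<dots> = (mu / 2) * ee n x" using out_ee[OF assms] by simp
  finally show ?thesis .
qed

lemma alpha_cong: "(\<And>a. a \<in> A \<Longrightarrow> \<psi> a = \<phi> a) \<Longrightarrow> alpha \<psi> = alpha \<phi>"
  unfolding alpha_def by (rule sum.cong) auto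
lemma beta_cong: "(\<And>a. a \<in> A \<Longrightarrow> \<psi> a = \<phi> a) \<Longrightarrow> beta \<psi> = beta \<phi>"
  unfolding beta_def by (rule sum.cong) auto

lemma walk_cheb: assumes x: "x \<in> V"
  defines "\<phi> \<equiv> mvec V (conj_transpose (bdry V A)) (unitvec x)"
  shows "alpha (mvec A (mpow A (walkU V A) (Suc t)) \<phi>) = ee n x * Qf (Suc t) (mu / 2) \<and>
         beta (mvec A (mpow A (walkU V A) (Suc t)) \<phi>) = ee n x * Qf t (mu / 2)"
proof (induct t)
  case 0
  have p0: "alpha (mvec A (mpow A (walkU V A) 0) \<phi>) = 2 * ee n x"
           "beta (mvec A (mpow A (walkU V A) 0) \<phi>) = (mu / 2) * ee n x"
  proof -
    have "mvec A (mpow A (walkU V A) 0) \<phi> a = \<phi> a" if a: "a \<in> A" for a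
    proof -
      have "mvec A (mpow A (walkU V A) 0) \<phi> a = (\<Sum>j\<in>A. if a = j then \<phi> j else 0)"
        unfolding mvec_def by (intro sum.cong refl) (auto simp: idmat_def)
      also have "\<dots> = \<phi> a" using a finA by (simp add: sum.delta)
      finally show ?thesis .
    qed
    hence "alpha (mvec A (mpow A (walkU V A) 0) \<phi>) = alpha \<phi>"
          "beta (mvec A (mpow A (walkU V A) 0) \<phi>) = beta \<phi>"
      by (intro alpha_cong beta_cong; simp)+
    thus "alpha (mvec A (mpow A (walkU V A) 0) \<phi>) = 2 * ee n x"
         "beta (mvec A (mpow A (walkU V A) 0) \<phi>) = (mu / 2) * ee n x"
      using alpha_init[OF x] beta_init[OF x] unfolding \<phi>_def by simp_all
  qed
  have s: "mvec A (mpow A (walkU V A) (Suc 0)) \<phi> = mvec A (walkU V A) (mvec A (mpow A (walkU V A) 0) \<phi>)"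
    by (simp add: mvec_mmult)
  show ?case unfolding s alpha_U beta_U p0 by (simp add: field_simps)
next
  case (Suc t)
  have s: "mvec A (mpow A (walkU V A) (Suc (Suc t))) \<phi> = mvec A (walkU V A) (mvec A (mpow A (walkU V A) (Suc t)) \<phi>)"
    by (simp only: mpow.simps mvec_mmult)
  show ?case unfolding s alpha_U beta_U using Suc by (simp add: right_diff_distrib)
qed

lemma walk_main:
  assumes x: "x \<in> V" and y: "y \<in> V" and tau: "\<tau> \<ge> 1" and g: "cmod \<gamma> = 1"
    and pst: "\<forall>a\<in>A. mvec A (mpow A (walkU V A) \<tau>) (mvec V (conj_transpose (bdry V A)) (unitvec x)) a
             = \<gamma> * mvec V (conj_transpose (bdry V A)) (unitvec y) a"
  shows "cmod (Qf \<tau> (mu / 2)) = 2"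
proof -
  obtain t where t: "\<tau> = Suc t" using tau by (cases \<tau>) auto
  have "alpha (mvec A (mpow A (walkU V A) \<tau>) (mvec V (conj_transpose (bdry V A)) (unitvec x)))
      = alpha (\<lambda>a. \<gamma> * mvec V (conj_transpose (bdry V A)) (unitvec y) a)"
    using pst by (intro alpha_cong) auto
  also have "\<dots> = \<gamma> * alpha (mvec V (conj_transpose (bdry V A)) (unitvec y))"
    unfolding alpha_def by (simp add: sum_distrib_left mult_ac)
  also have "\<dots> = \<gamma> * (2 * ee n y)" using alpha_init[OF y] by simp
  finally have "ee n x * Qf \<tau> (mu / 2) = \<gamma> * (2 * ee n y)"
    using walk_cheb[OF x, of t] t by simp
  hence "cmod (ee n x * Qf \<tau> (mu / 2)) = cmod (\<gamma> * (2 * ee n y))" by simp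
  moreover have "cmod (ee n v) = 1" for v unfolding ee_def by simp
  ultimately show ?thesis using g by (simp add: norm_mult)
qed

end


fun Qp :: "nat \<Rightarrow> int poly" where
  "Qp 0 = [:2:]"
| "Qp (Suc 0) = [:0, 1:]"
| "Qp (Suc (Suc t)) = [:0, 1:] * Qp (Suc t) - Qp t"

lemma Qp_poly: "poly (of_int_poly (Qp t)) (y::complex) = Qf t y"
  by (induct t rule: Qp.induct) (simp_all add: hom_distribs)

lemma Qp_deg: "degree (Qp t) = t \<and> lead_coeff (Qp t) = (if t = 0 then 2 else 1)"
proof (induct t rule: Qp.induct)
  case 1 thus ?case by simp
next
  case 2 thus ?case by simp
next
  case (3 t)
  have d1: "degree ([:0, 1:] * Qp (Suc t)) = Suc (Suc t)"
    using 3 by (subst degree_mult_eq) auto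
  have m: "lead_coeff (Qp (Suc t)) = 1" using "3"(1) by (elim conjE) simp
  have l1: "lead_coeff ([:0, 1:] * Qp (Suc t)) = 1"
    unfolding lead_coeff_mult m by simp
  have lt: "degree (- Qp t) < degree ([:0, 1:] * Qp (Suc t))" using d1 3 by simp
  have e: "Qp (Suc (Suc t)) = - Qp t + [:0, 1:] * Qp (Suc t)" by simp
  have "degree (- Qp t + [:0, 1:] * Qp (Suc t)) = Suc (Suc t)"
    using degree_add_eq_left[OF lt] d1 by (simp add: add.commute)
  moreover have "lead_coeff (- Qp t + [:0, 1:] * Qp (Suc t)) = 1"
    using lead_coeff_add_le[OF lt] l1 by simp
  ultimately show ?case unfolding e by simp
qed

lemma Qf_real: "Qf t (of_real r :: complex) = of_real (Qf t r)"
  by (induct t rule: Qp.induct) simp_all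

lemma alg_from_cheb:
  assumes "\<tau> \<ge> 1" "cmod (Qf \<tau> (of_real r :: complex)) = 2"
  shows "algebraic_int (of_real r :: complex)"
proof -
  define p where "p = [:-4:] + Qp \<tau> * Qp \<tau>"
  have "\<bar>Qf \<tau> r\<bar> = 2" using assms(2) unfolding Qf_real by simp
  hence "Qf \<tau> r = 2 \<or> Qf \<tau> r = -2" by arith
  hence q4: "Qf \<tau> r * Qf \<tau> r = 4" by auto
  have "poly (of_int_poly p) (of_real r :: complex) = Qf \<tau> (of_real r) * Qf \<tau> (of_real r) - 4"
    unfolding p_def by (simp add: hom_distribs Qp_poly)
  also have "\<dots> = 0" unfolding Qf_real using q4 by (metis diff_self of_real_mult of_real_numeral)
  finally have root: "poly (of_int_poly p) (of_real r :: complex) = 0" .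
  have dq: "degree (Qp \<tau>) = \<tau>" "lead_coeff (Qp \<tau>) = 1" using Qp_deg[of \<tau>] assms(1) by auto
  have dqq: "degree (Qp \<tau> * Qp \<tau>) = 2 * \<tau>" using dq by (subst degree_mult_eq) auto
  have lt: "degree [:-4:] < degree (Qp \<tau> * Qp \<tau>)" using dqq assms(1) by simp
  have "lead_coeff p = lead_coeff (Qp \<tau> * Qp \<tau>)" unfolding p_def by (rule lead_coeff_add_le[OF lt])
  also have "\<dots> = 1" unfolding lead_coeff_mult dq(2) by simp
  finally have "lead_coeff p = 1" .
  thus ?thesis using root algebraic_int_altdef_ipoly by blast
qed



theorem theorem9p19:
  fixes l a b :: int
  assumes "l \<ge> 2" and "even l"
    and "a \<in> {1..l-1}" and "b \<in> {1..l-1}"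
    and "graph_connected (circ_verts (2*l))
           (circ_arcs (2*l) {a mod (2*l), (-a) mod (2*l), b mod (2*l), (-b) mod (2*l)})"
    and "graph_regular (circ_verts (2*l))
           (circ_arcs (2*l) {a mod (2*l), (-a) mod (2*l), b mod (2*l), (-b) mod (2*l)}) 4"
    and "a + b \<noteq> l"
  shows "\<not> has_vertex_PST (circ_verts (2*l))
           (circ_arcs (2*l) {a mod (2*l), (-a) mod (2*l), b mod (2*l), (-b) mod (2*l)})"
proof
  define n where "n = 2 * l"
  define S where "S = {a mod n, (-a) mod n, b mod n, (-b) mod n}"
  note conn = assms(5)[folded n_def, folded S_def]
  note regu = assms(6)[folded n_def, folded S_def]
  assume "has_vertex_PST (circ_verts (2*l))
           (circ_arcs (2*l) {a mod (2*l), (-a) mod (2*l), b mod (2*l), (-b) mod (2*l)})"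
  hence pst: "has_vertex_PST (circ_verts n) (circ_arcs n S)" unfolding n_def S_def .
  have npos: "n > 0" unfolding n_def using assms(1) by simp
  have Ssub: "S \<subseteq> {0..<n}" unfolding S_def using npos by auto
  have Sneg: "(-s) mod n \<in> S" if "s \<in> S" for s
  proof -
    have "(- (x mod n)) mod n = (- x) mod n" for x by (simp add: mod_minus_eq)
    thus ?thesis using that unfolding S_def by auto
  qed
  interpret C: circ n S
    by unfold_locales (use npos Ssub Sneg regu in \<open>auto simp: graph_regular_def\<close>)
  obtain x y \<tau> \<gamma> where xy: "x \<in> circ_verts n" "y \<in> circ_verts n" "\<tau> \<ge> 1" "cmod \<gamma> = 1"
    and eq: "\<forall>a\<in>circ_arcs n S. mvec (circ_arcs n S) (mpow (circ_arcs n S) (walkU (circ_verts n) (circ_arcs n S)) \<tau>)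
               (mvec (circ_verts n) (conj_transpose (bdry (circ_verts n) (circ_arcs n S))) (unitvec x)) a
             = \<gamma> * mvec (circ_verts n) (conj_transpose (bdry (circ_verts n) (circ_arcs n S))) (unitvec y) a"
    using pst unfolding has_vertex_PST_def by blast
  have Q2: "cmod (Qf \<tau> (C.mu / 2)) = 2" by (rule C.walk_main[OF xy eq])
  have dist: "a mod n \<noteq> (-a) mod n \<and> a mod n \<noteq> b mod n \<and> a mod n \<noteq> (-b) mod n \<and>
      (-a) mod n \<noteq> b mod n \<and> (-a) mod n \<noteq> (-b) mod n \<and> b mod n \<noteq> (-b) mod n"
    using C.cardS unfolding S_def by (auto simp: card_insert_if split: if_splits)
  have mu0: "C.mu = (\<Sum>s\<in>S. ee n s)" by (rule C.mu_def)
  have mu: "C.mu = ee n a + ee n (-a) + ee n b + ee n (-b)"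
    unfolding mu0 unfolding S_def using dist npos by (simp add: ee_mod add.assoc)
  have ab: "a \<noteq> b" using dist by auto
  define r where "r = Re (ee n a) + Re (ee n b)"
  have mur: "C.mu / 2 = of_real r"
  proof -
    have "ee n a + ee n (-a) = of_real (2 * Re (ee n a))"
      using complex_add_cnj[of "ee n a"] by (simp add: ee_cnj)
    moreover have "ee n b + ee n (-b) = of_real (2 * Re (ee n b))"
      using complex_add_cnj[of "ee n b"] by (simp add: ee_cnj)
    ultimately have "C.mu = of_real (2 * r)" unfolding mu r_def by (simp add: algebra_simps)
    thus ?thesis by simp
  qed
  have alg: "algebraic_int (C.mu / 2)" unfolding mur
    by (rule alg_from_cheb[OF xy(3)]) (use Q2 mur in simp)
  have gcd: "g dvd 1" if g: "g dvd a" "g dvd b" "g dvd 2 * l" for g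
  proof -
    have gn: "g dvd n" using g(3) unfolding n_def .
    have gS: "g dvd s" if "s \<in> S" for s
      using that g gn unfolding S_def by (auto simp: dvd_mod_iff)
    have "g dvd z" if "(0, z) \<in> (circ_arcs n S)\<^sup>*" for z
      using that
    proof (induct rule: rtrancl_induct)
      case base thus ?case by simp
    next
      case (step u z)
      hence "(z - u) mod n \<in> S" using C.A_iff by auto
      hence "g dvd (z - u) mod n" using gS by blast
      hence "g dvd z - u" using gn by (simp add: dvd_mod_iff)
      thus ?case using step(3) by (metis diff_add_cancel dvd_add)
    qed
    moreover have "(0, 1) \<in> (circ_arcs n S)\<^sup>*"
      using conn npos assms(1) unfolding graph_connected_def circ_verts_def n_def by auto
    ultimately show ?thesis by blast
  qed
  have "\<not> algebraic_int ((ee (2*l) a + ee (2*l) (-a) + ee (2*l) b + ee (2*l) (-b)) / 2)"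
    by (rule main_nt) (use assms ab gcd in auto)
  moreover have "algebraic_int ((ee n a + ee n (-a) + ee n b + ee n (-b)) / 2)"
    using alg unfolding mu .
  ultimately show False unfolding n_def by simp
qed

end
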